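(* Let $a,q$ be complex numbers with $q\ne0$, and let $B_{n,1}(a,0)$ ($n\ge1$) be defined by $z=\sum_{n=1}^\infty B_{n,1}(a,0)\,z^n(az;q)_n$ in $\mathbb{C}[[z]]$. Then every $F(z)\in\mathbb{C}[[z]]$ has the expansion $$F(z)=\sum_{n=0}^{\infty}c_nz^{n}(az;q)_n,$$ where $$c_n=[z^{n}]\Big\{\frac{F(z)}{(az;q)_n}\Big\}-a\sum_{k=0}^{n-1}B_{n-k,1}(a,0)\,q^{(n-k)k}\,[z^{k}]\Big\{\frac{F(z)}{(az;q)_{k+1}}\Big\}.$$
   Context: $(x;q)_n=\prod_{j=0}^{n-1}(1-xq^j)$ for $n\ge0$, $(x;q)_0=1$; quotients are regarded as formal power series in $z$, and $[z^m]\{f\}$ is the coefficient of $z^m$ in $f$. Empty sums are $0$. *)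

theory Defs
  imports "HOL-Computational_Algebra.Formal_Power_Series"
begin

definition qpoch_fps :: "complex \<Rightarrow> complex \<Rightarrow> nat \<Rightarrow> complex fps" where
  "qpoch_fps a q n = (\<Prod>j<n. 1 - fps_const (a * q ^ j) * fps_X)"

end

theory Submission
  imports Defs
begin

unbundle fps_syntax

definition eqm :: "nat \<Rightarrow> complex fps \<Rightarrow> complex fps \<Rightarrow> bool" where
  "eqm M f g \<longleftrightarrow> (\<forall>i<M. f $ i = g $ i)"

lemma eqm_refl[simp]: "eqm M f f" by (simp add: eqm_def)
lemma eqm_sym: "eqm M f g \<Longrightarrow> eqm M g f" by (simp add: eqm_def)
lemma eqm_trans: "eqm M f g \<Longrightarrow> eqm M g h \<Longrightarrow> eqm M f h" by (simp add: eqm_def)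
lemma eqm_add: "eqm M f g \<Longrightarrow> eqm M f' g' \<Longrightarrow> eqm M (f + f') (g + g')" by (simp add: eqm_def)
lemma eqm_diff: "eqm M f g \<Longrightarrow> eqm M f' g' \<Longrightarrow> eqm M (f - f') (g - g')" by (simp add: eqm_def)
lemma eqm_mult_left: "eqm M f g \<Longrightarrow> eqm M (h * f) (h * g)"
  by (auto simp add: eqm_def fps_mult_nth intro!: sum.cong)
lemma eqm_mult_right: "eqm M f g \<Longrightarrow> eqm M (f * h) (g * h)"
  by (auto simp add: eqm_def fps_mult_nth intro!: sum.cong)
lemma eqm_sum: "(\<And>k. k \<in> A \<Longrightarrow> eqm M (f k) (g k)) \<Longrightarrow> eqm M (sum f A) (sum g A)"
  by (auto simp add: eqm_def fps_sum_nth intro!: sum.cong)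
lemma eqm_Xpow: "M \<le> m \<Longrightarrow> eqm M (fps_X ^ m * h) 0"
  by (auto simp add: eqm_def fps_X_power_mult_nth)

lemma eqm_restrict:
  assumes "finite A" "\<And>m. m \<in> A \<Longrightarrow> M \<le> m \<Longrightarrow> eqm M (T m) 0"
  shows "eqm M (sum T A) (sum T (A \<inter> {..<M}))"
proof -
  have "sum T A = sum T (A \<inter> {..<M}) + sum T (A - {..<M})"
    using assms(1) by (metis Int_Diff_Un Int_Diff_disjoint Int_commute finite_Int sum.union_disjoint finite_Diff)
  moreover have "eqm M (sum T (A - {..<M})) (sum (\<lambda>_. 0) (A - {..<M}))"
    by (rule eqm_sum) (use assms(2) in auto)
  ultimately show ?thesis using eqm_add[of M "sum T (A \<inter> {..<M})" _ "sum T (A - {..<M})" 0] by simp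
qed

lemma qpoch_Suc: "qpoch_fps a q (Suc n) = qpoch_fps a q n * (1 - fps_const (a * q ^ n) * fps_X)"
  by (simp add: qpoch_fps_def)

lemma qpoch_0[simp]: "qpoch_fps a q 0 = 1" by (simp add: qpoch_fps_def)

lemma qpoch_nth0[simp]: "qpoch_fps a q n $ 0 = 1"
  by (induction n) (simp_all add: qpoch_Suc fps_mult_nth)

definition scl :: "complex \<Rightarrow> complex fps \<Rightarrow> complex fps" where
  "scl c f = Abs_fps (\<lambda>i. c ^ i * f $ i)"

lemma scl_nth[simp]: "scl c f $ i = c ^ i * f $ i" by (simp add: scl_def)

lemma scl_mult: "scl c (f * g) = scl c f * scl c g"
proof (rule fps_ext)
  fix n
  have "scl c (f * g) $ n = (\<Sum>i=0..n. c ^ i * f $ i * (c ^ (n - i) * g $ (n - i)))"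
    by (auto simp add: fps_mult_nth sum_distrib_left intro!: sum.cong simp flip: power_add)
  then show "scl c (f * g) $ n = (scl c f * scl c g) $ n" by (simp add: fps_mult_nth)
qed

lemma scl_add: "scl c (f + g) = scl c f + scl c g"
  by (rule fps_ext) (simp add: algebra_simps)
lemma scl_diff: "scl c (f - g) = scl c f - scl c g"
  by (rule fps_ext) (simp add: algebra_simps)
lemma scl_sum: "scl c (sum f A) = (\<Sum>k\<in>A. scl c (f k))"
  by (rule fps_ext) (simp add: fps_sum_nth sum_distrib_left)
lemma scl_const[simp]: "scl c (fps_const d) = fps_const d"
  by (rule fps_ext) simp
lemma scl_one[simp]: "scl c 1 = 1"
  by (rule fps_ext) simp
lemma scl_X[simp]: "scl c fps_X = fps_const c * fps_X"
  by (rule fps_ext) (simp add: fps_X_def)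
lemma scl_Xpow: "scl c (fps_X ^ m) = fps_const (c ^ m) * fps_X ^ m"
  by (induction m) (simp_all add: scl_mult fps_const_mult[symmetric] mult_ac del: fps_const_mult)
lemma eqm_scl: "eqm M f g \<Longrightarrow> eqm M (scl c f) (scl c g)"
  by (simp add: eqm_def)

lemma qpoch_shift: "qpoch_fps a q k * scl (q ^ k) (qpoch_fps a q m) = qpoch_fps a q (k + m)"
proof (induction m)
  case 0 then show ?case by simp
next
  case (Suc m)
  have "scl (q ^ k) (1 - fps_const (a * q ^ m) * fps_X) = 1 - fps_const (a * q ^ (k + m)) * fps_X"
    by (simp add: scl_diff scl_mult power_add mult_ac)
  then show ?case using Suc
    by (simp add: qpoch_Suc scl_mult mult.assoc[symmetric])
qed


lemma key_step:
  fixes W :: "complex fps" and c :: complex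
  defines "V \<equiv> (1 - fps_const c * fps_X) * W"
  shows "fps_const (c * W $ N) * fps_X + fps_shift N V
       = fps_const (V $ N) + fps_X * ((1 - fps_const c * fps_X) * fps_shift (Suc N) W)"
proof (rule fps_ext)
  fix i
  have V: "V $ j = W $ j - (if j = 0 then 0 else c * W $ (j - 1))" for j
    by (simp add: V_def algebra_simps)
  have L: "(1 - fps_const c * fps_X) * fps_shift (Suc N) W = fps_shift (Suc N) W - fps_const c * (fps_X * fps_shift (Suc N) W)"
    by (simp add: algebra_simps)
  show "(fps_const (c * W $ N) * fps_X + fps_shift N V) $ i =
        (fps_const (V $ N) + fps_X * ((1 - fps_const c * fps_X) * fps_shift (Suc N) W)) $ i"
    unfolding L
    by (cases i; cases "i - 1") (simp_all add: V mult.commute[of "fps_const _" fps_X])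
qed

lemma div_step:
  fixes P F :: "complex fps"
  assumes "P $ 0 \<noteq> 0"
  shows "(1 - fps_const c * fps_X) * (F / (P * (1 - fps_const c * fps_X))) = F / P"
proof -
  let ?L = "1 - fps_const c * fps_X :: complex fps"
  have L0: "?L $ 0 \<noteq> 0" by simp
  have "F / (P * ?L) = F * (inverse P * inverse ?L)"
    using assms by (simp add: fps_divide_unit fps_inverse_mult)
  then have "?L * (F / (P * ?L)) = F * inverse P * (inverse ?L * ?L)"
    by (simp add: mult_ac)
  also have "\<dots> = F / P" using assms L0 by (simp add: inverse_mult_eq_1 fps_divide_unit)
  finally show ?thesis .
qed

lemma exact_ident:
  fixes F :: "complex fps"
  shows "F + (\<Sum>k<N. fps_const (a * q ^ k * (F / qpoch_fps a q (Suc k)) $ k) * fps_X ^ (Suc k) * qpoch_fps a q k)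
     = (\<Sum>n<N. fps_const ((F / qpoch_fps a q n) $ n) * fps_X ^ n * qpoch_fps a q n)
       + fps_X ^ N * qpoch_fps a q N * fps_shift N (F / qpoch_fps a q N)"
proof (induction N)
  case 0 then show ?case by simp
next
  case (Suc N)
  let ?P = "qpoch_fps a q N"
  let ?c = "a * q ^ N"
  let ?W = "F / qpoch_fps a q (Suc N)"
  have V: "(1 - fps_const ?c * fps_X) * ?W = F / ?P"
    unfolding qpoch_Suc by (rule div_step) simp
  have K: "fps_const (?c * ?W $ N) * fps_X + fps_shift N (F / ?P)
       = fps_const ((F / ?P) $ N) + fps_X * ((1 - fps_const ?c * fps_X) * fps_shift (Suc N) ?W)"
    using key_step[of ?c ?W N] unfolding V .
  have "fps_const (?c * ?W $ N) * fps_X ^ Suc N * ?P + fps_X ^ N * ?P * fps_shift N (F / ?P)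
      = fps_X ^ N * ?P * (fps_const (?c * ?W $ N) * fps_X + fps_shift N (F / ?P))"
    by (simp add: algebra_simps)
  also have "\<dots> = fps_X ^ N * ?P * (fps_const ((F / ?P) $ N) + fps_X * ((1 - fps_const ?c * fps_X) * fps_shift (Suc N) ?W))"
    unfolding K ..
  also have "\<dots> = fps_const ((F / ?P) $ N) * fps_X ^ N * ?P + fps_X ^ Suc N * qpoch_fps a q (Suc N) * fps_shift (Suc N) ?W"
    by (simp add: qpoch_Suc algebra_simps)
  finally have E: "fps_const (?c * ?W $ N) * fps_X ^ Suc N * ?P + fps_X ^ N * ?P * fps_shift N (F / ?P)
      = fps_const ((F / ?P) $ N) * fps_X ^ N * ?P + fps_X ^ Suc N * qpoch_fps a q (Suc N) * fps_shift (Suc N) ?W" .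
  show ?case
    unfolding sum.lessThan_Suc
    using Suc.IH E by (simp add: add.assoc[symmetric]) (metis (no_types, lifting) add.assoc add.commute)
qed


lemma eqm_term: "M \<le> m \<Longrightarrow> eqm M (fps_const d * fps_X ^ m * h) 0"
proof -
  assume "M \<le> m"
  then have "eqm M (fps_X ^ m * (fps_const d * h)) 0" by (rule eqm_Xpow)
  then show ?thesis by (simp add: mult_ac)
qed

lemma B_trunc:
  fixes B :: "nat \<Rightarrow> complex"
  assumes B: "(\<lambda>n. fps_const (B (Suc n)) * fps_X ^ (Suc n) * qpoch_fps a q (Suc n)) sums fps_X"
  shows "eqm M fps_X (\<Sum>n<M. fps_const (B (Suc n)) * fps_X ^ (Suc n) * qpoch_fps a q (Suc n))"
  unfolding eqm_def
proof (intro allI impI)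
  fix i assume i: "i < M"
  let ?b = "\<lambda>n. fps_const (B (Suc n)) * fps_X ^ (Suc n) * qpoch_fps a q (Suc n)"
  from B have "(\<lambda>N. \<Sum>n<N. ?b n) \<longlonglongrightarrow> fps_X" by (simp add: sums_def)
  then have "eventually (\<lambda>N. (\<Sum>n<N. ?b n) $ i = fps_X $ i) sequentially"
    unfolding tendsto_fps_iff by blast
  then obtain N0 where N0: "\<And>N. N \<ge> N0 \<Longrightarrow> (\<Sum>n<N. ?b n) $ i = fps_X $ i"
    by (auto simp: eventually_sequentially)
  define N where "N = max N0 M"
  have "eqm M (sum ?b {..<N}) (sum ?b ({..<N} \<inter> {..<M}))"
    by (rule eqm_restrict, simp, rule eqm_term, simp)
  moreover have "{..<N} \<inter> {..<M} = {..<M}" by (auto simp: N_def)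
  ultimately have "(sum ?b {..<N}) $ i = (sum ?b {..<M}) $ i" using i by (simp add: eqm_def)
  with N0[of N] show "fps_X $ i = (\<Sum>n<M. ?b n) $ i" by (simp add: N_def)
qed

lemma B_shift:
  fixes B :: "nat \<Rightarrow> complex"
  assumes B: "(\<lambda>n. fps_const (B (Suc n)) * fps_X ^ (Suc n) * qpoch_fps a q (Suc n)) sums fps_X"
  shows "eqm M (fps_const (q ^ k) * fps_X ^ (Suc k) * qpoch_fps a q k)
     (\<Sum>m<M. if k < m then fps_const (B (m - k) * q ^ ((m - k) * k)) * fps_X ^ m * qpoch_fps a q m else 0)"
proof -
  define T where "T m = fps_const (B (m - k) * q ^ ((m - k) * k)) * fps_X ^ m * qpoch_fps a q m" for m
  have "eqm M (scl (q ^ k) fps_X) (scl (q ^ k) (\<Sum>n<M. fps_const (B (Suc n)) * fps_X ^ (Suc n) * qpoch_fps a q (Suc n)))"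
    by (rule eqm_scl[OF B_trunc[OF B]])
  then have e1: "eqm M (fps_X ^ k * qpoch_fps a q k * scl (q ^ k) fps_X)
     (fps_X ^ k * qpoch_fps a q k * scl (q ^ k) (\<Sum>n<M. fps_const (B (Suc n)) * fps_X ^ (Suc n) * qpoch_fps a q (Suc n)))"
    by (rule eqm_mult_left)
  have e2: "fps_X ^ k * qpoch_fps a q k * scl (q ^ k) fps_X = fps_const (q ^ k) * fps_X ^ (Suc k) * qpoch_fps a q k"
    by (simp add: mult_ac)
  have e3: "fps_X ^ k * qpoch_fps a q k * scl (q ^ k) (\<Sum>n<M. fps_const (B (Suc n)) * fps_X ^ (Suc n) * qpoch_fps a q (Suc n))
     = (\<Sum>n<M. T (n + Suc k))"
  proof -
    have "fps_X ^ k * qpoch_fps a q k * scl (q ^ k) (fps_const (B (Suc n)) * fps_X ^ (Suc n) * qpoch_fps a q (Suc n)) = T (n + Suc k)" for n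
    proof -
      have "fps_X ^ k * qpoch_fps a q k * scl (q ^ k) (fps_const (B (Suc n)) * fps_X ^ (Suc n) * qpoch_fps a q (Suc n))
         = fps_const (B (Suc n)) * fps_const ((q ^ k) ^ Suc n) * (fps_X ^ k * fps_X ^ Suc n) * (qpoch_fps a q k * scl (q ^ k) (qpoch_fps a q (Suc n)))"
        by (simp add: scl_mult scl_Xpow mult_ac)
      also have "\<dots> = T (n + Suc k)"
        unfolding qpoch_shift T_def by (simp add: power_add[symmetric] power_mult[symmetric] ac_simps)
      finally show ?thesis .
    qed
    then show ?thesis by (simp add: scl_sum sum_distrib_left)
  qed
  have 1: "eqm M (fps_const (q ^ k) * fps_X ^ (Suc k) * qpoch_fps a q k) (\<Sum>n<M. T (n + Suc k))"
    using e1 unfolding e2 e3 .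
  have r1: "(\<Sum>n<M. T (n + Suc k)) = sum T {0 + Suc k..<M + Suc k}"
    unfolding sum.shift_bounds_nat_ivl atLeast0LessThan ..
  have r2: "eqm M (sum T {0 + Suc k..<M + Suc k}) (sum T ({0 + Suc k..<M + Suc k} \<inter> {..<M}))"
    by (rule eqm_restrict) (auto simp: T_def intro!: eqm_term)
  have r3: "{0 + Suc k..<M + Suc k} \<inter> {..<M} = {m \<in> {..<M}. k < m}" by auto
  have r4: "sum T {m \<in> {..<M}. k < m} = (\<Sum>m<M. if k < m then T m else 0)"
    by (rule sum.inter_filter) simp
  from 1 have "eqm M (fps_const (q ^ k) * fps_X ^ (Suc k) * qpoch_fps a q k) (sum T {0 + Suc k..<M + Suc k})"
    unfolding r1 .
  then have "eqm M (fps_const (q ^ k) * fps_X ^ (Suc k) * qpoch_fps a q k) (sum T ({0 + Suc k..<M + Suc k} \<inter> {..<M}))"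
    using r2 by (rule eqm_trans)
  then show ?thesis unfolding r3 r4 unfolding T_def .
qed


lemma fps_const_sum: "fps_const (sum f A) = (\<Sum>x\<in>A. fps_const (f x))"
  by (rule fps_ext) (simp add: fps_sum_nth)

lemma main_eqm:
  fixes a q :: complex and B :: "nat \<Rightarrow> complex" and F :: "complex fps"
  assumes B: "(\<lambda>n. fps_const (B (Suc n)) * fps_X ^ (Suc n) * qpoch_fps a q (Suc n)) sums fps_X"
  shows "eqm M F (\<Sum>n<M. fps_const
            (fps_nth (F / qpoch_fps a q n) n
             - a * (\<Sum>k<n. B (n - k) * q ^ ((n - k) * k)
                        * fps_nth (F / qpoch_fps a q (Suc k)) k))
          * fps_X ^ n * qpoch_fps a q n)"
proof -
  define P where "P = qpoch_fps a q"
  define G where "G k = (F / P (Suc k)) $ k" for k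
  define A where "A n = (F / P n) $ n" for n
  define be where "be m k = B (m - k) * q ^ ((m - k) * k)" for m k
  define S where "S = (\<Sum>k<M. fps_const (a * q ^ k * G k) * fps_X ^ (Suc k) * P k)"
  define R where "R = (\<Sum>n<M. fps_const (A n) * fps_X ^ n * P n)"
  define S' where "S' = (\<Sum>m<M. fps_const (a * (\<Sum>k<m. be m k * G k)) * fps_X ^ m * P m)"
  have ex: "F + S = R + fps_X ^ M * (P M * fps_shift M (F / P M))"
    using exact_ident[of F a q M] unfolding S_def R_def G_def A_def P_def by (simp add: mult.assoc)
  have "eqm M (F + S) (R + 0)"
    unfolding ex by (rule eqm_add[OF eqm_refl eqm_Xpow]) simp
  then have s1: "eqm M (F + S) R" by simp
  have "eqm M S (\<Sum>k<M. fps_const (a * G k) * (\<Sum>m<M. if k < m then fps_const (be m k) * fps_X ^ m * P m else 0))"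
  proof -
    have "S = (\<Sum>k<M. fps_const (a * G k) * (fps_const (q ^ k) * fps_X ^ (Suc k) * P k))"
      unfolding S_def by (simp add: mult_ac)
    also have "eqm M \<dots> (\<Sum>k<M. fps_const (a * G k) * (\<Sum>m<M. if k < m then fps_const (be m k) * fps_X ^ m * P m else 0))"
      by (rule eqm_sum, rule eqm_mult_left) (unfold P_def be_def, rule B_shift[OF B])
    finally show ?thesis .
  qed
  also have "(\<Sum>k<M. fps_const (a * G k) * (\<Sum>m<M. if k < m then fps_const (be m k) * fps_X ^ m * P m else 0)) = S'"
  proof -
    have "(\<Sum>k<M. fps_const (a * G k) * (\<Sum>m<M. if k < m then fps_const (be m k) * fps_X ^ m * P m else 0))
        = (\<Sum>k<M. \<Sum>m<M. if k < m then fps_const (a * G k * be m k) * fps_X ^ m * P m else 0)"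
      unfolding sum_distrib_left
      by (rule sum.cong[OF refl], rule sum.cong[OF refl]) (simp add: mult_ac)
    also have "\<dots> = (\<Sum>m<M. \<Sum>k<M. if k < m then fps_const (a * G k * be m k) * fps_X ^ m * P m else 0)"
      by (rule sum.swap)
    also have "\<dots> = (\<Sum>m<M. \<Sum>k<m. fps_const (a * G k * be m k) * fps_X ^ m * P m)"
    proof (rule sum.cong[OF refl])
      fix m assume m: "m \<in> {..<M}"
      have "{k \<in> {..<M}. k < m} = {..<m}" using m by auto
      then show "(\<Sum>k<M. if k < m then fps_const (a * G k * be m k) * fps_X ^ m * P m else 0)
          = (\<Sum>k<m. fps_const (a * G k * be m k) * fps_X ^ m * P m)"
        using sum.inter_filter[of "{..<M}" "\<lambda>k. fps_const (a * G k * be m k) * fps_X ^ m * P m" "\<lambda>k. k < m"]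
        by simp
    qed
    also have "\<dots> = S'"
      unfolding S'_def fps_const_sum sum_distrib_left sum_distrib_right
      by (rule sum.cong[OF refl], rule sum.cong[OF refl]) (simp add: mult_ac)
    finally show ?thesis .
  qed
  finally have s2: "eqm M S S'" .
  have "eqm M (F + S - S) (R - S')" by (rule eqm_diff[OF s1 s2])
  then have "eqm M F (R - S')" by simp
  moreover have "R - S' = (\<Sum>n<M. fps_const (A n - a * (\<Sum>k<n. be n k * G k)) * fps_X ^ n * P n)"
    unfolding R_def S'_def sum_subtractf[symmetric]
    by (rule sum.cong[OF refl]) (simp add: algebra_simps del: fps_const_sub flip: fps_const_sub)
  ultimately show ?thesis unfolding A_def be_def G_def P_def by simp
qed

theorem corollary2p3:
  fixes a q :: complex and B :: "nat \<Rightarrow> complex" and F :: "complex fps"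
  assumes "q \<noteq> 0"
    and B: "(\<lambda>n. fps_const (B (Suc n)) * fps_X ^ (Suc n) * qpoch_fps a q (Suc n)) sums fps_X"
  shows "(\<lambda>n. fps_const
            (fps_nth (F / qpoch_fps a q n) n
             - a * (\<Sum>k<n. B (n - k) * q ^ ((n - k) * k)
                        * fps_nth (F / qpoch_fps a q (Suc k)) k))
          * fps_X ^ n * qpoch_fps a q n) sums F"
  unfolding sums_def tendsto_fps_iff
proof
  fix i
  show "eventually (\<lambda>M. (\<Sum>n<M. fps_const
            (fps_nth (F / qpoch_fps a q n) n
             - a * (\<Sum>k<n. B (n - k) * q ^ ((n - k) * k)
                        * fps_nth (F / qpoch_fps a q (Suc k)) k))
          * fps_X ^ n * qpoch_fps a q n) $ i = F $ i) sequentially"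
    unfolding eventually_sequentially
  proof (intro exI allI impI)
    fix M assume "Suc i \<le> M"
    with main_eqm[OF B, of M F] show "(\<Sum>n<M. fps_const
            (fps_nth (F / qpoch_fps a q n) n
             - a * (\<Sum>k<n. B (n - k) * q ^ ((n - k) * k)
                        * fps_nth (F / qpoch_fps a q (Suc k)) k))
          * fps_X ^ n * qpoch_fps a q n) $ i = F $ i"
      by (simp add: eqm_def)
  qed
qed

end
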